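(* Let $\mathcal{X}$ be a finite set, $\pi$ a probability mass function on $\mathcal{X}$ with full support, and $P$ an ergodic $\pi$-reversible (self-adjoint on $\ell^2(\pi)$) transition matrix. Let a group $\mathcal{G}$ act on $\mathcal{X}$ and let $M$, $B$ be the Metropolis–Hastings and Barker orbit kernels. Then $\rho(MPM)\le\rho(P)$ and $\rho(BPB)\le\rho(P)$.
   Context: $\langle f,g\rangle_\pi=\sum_x f(x)g(x)\pi(x)$ and $\ell^2_0(\pi)=\{f:\sum_x f(x)\pi(x)=0\}$. With $\mathcal{O}(x)$ the orbit of $x$: $M(x,y)=\frac{1}{|\mathcal{O}(x)|-1}\min\{1,\pi(y)/\pi(x)\}$ for $y\in\mathcal{O}(x)\setminus\{x\}$, $M(x,y)=0$ for $y\notin\mathcal{O}(x)$, $M(x,x)=1-\sum_{y\ne x}M(x,y)$ (so $M(x,x)=1$ if the orbit is a singleton); $B$ is defined identically with acceptance $\pi(y)/(\pi(x)+\pi(y))$. For a $\pi$-self-adjoint kernel $K$, $\rho(K)=\sup_{0\ne f\in\ell^2_0(\pi)}|\langle f,Kf\rangle_\pi|/\langle f,f\rangle_\pi$. *)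

theory Defs
  imports Complex_Main "HOL-Algebra.Group_Action"
begin

definition ip :: "('a::finite \<Rightarrow> real) \<Rightarrow> ('a \<Rightarrow> real) \<Rightarrow> ('a \<Rightarrow> real) \<Rightarrow> real" where
  "ip \<pi> f g = (\<Sum>x\<in>UNIV. f x * g x * \<pi> x)"

definition l2_0 :: "('a::finite \<Rightarrow> real) \<Rightarrow> ('a \<Rightarrow> real) set" where
  "l2_0 \<pi> = {f. (\<Sum>x\<in>UNIV. f x * \<pi> x) = 0}"

definition kapply :: "('a::finite \<Rightarrow> 'a \<Rightarrow> real) \<Rightarrow> ('a \<Rightarrow> real) \<Rightarrow> ('a \<Rightarrow> real)" where
  "kapply K f = (\<lambda>x. \<Sum>y\<in>UNIV. K x y * f y)"

definition kmult :: "('a::finite \<Rightarrow> 'a \<Rightarrow> real) \<Rightarrow> ('a \<Rightarrow> 'a \<Rightarrow> real) \<Rightarrow> ('a \<Rightarrow> 'a \<Rightarrow> real)" where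
  "kmult K L = (\<lambda>x y. \<Sum>z\<in>UNIV. K x z * L z y)"

fun kpow :: "('a::finite \<Rightarrow> 'a \<Rightarrow> real) \<Rightarrow> nat \<Rightarrow> ('a \<Rightarrow> 'a \<Rightarrow> real)" where
  "kpow K 0 = (\<lambda>x y. if x = y then 1 else 0)"
| "kpow K (Suc n) = kmult (kpow K n) K"

definition rho :: "('a::finite \<Rightarrow> real) \<Rightarrow> ('a \<Rightarrow> 'a \<Rightarrow> real) \<Rightarrow> real" where
  "rho \<pi> K = Sup {\<bar>ip \<pi> f (kapply K f)\<bar> / ip \<pi> f f | f. f \<in> l2_0 \<pi> \<and> f \<noteq> (\<lambda>_. 0)}"

definition pmf_full_support :: "('a::finite \<Rightarrow> real) \<Rightarrow> bool" where
  "pmf_full_support \<pi> \<longleftrightarrow> (\<forall>x. \<pi> x > 0) \<and> (\<Sum>x\<in>UNIV. \<pi> x) = 1"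

definition stochastic :: "('a::finite \<Rightarrow> 'a \<Rightarrow> real) \<Rightarrow> bool" where
  "stochastic P \<longleftrightarrow> (\<forall>x y. P x y \<ge> 0) \<and> (\<forall>x. (\<Sum>y\<in>UNIV. P x y) = 1)"

definition reversible :: "('a::finite \<Rightarrow> real) \<Rightarrow> ('a \<Rightarrow> 'a \<Rightarrow> real) \<Rightarrow> bool" where
  "reversible \<pi> P \<longleftrightarrow> (\<forall>x y. \<pi> x * P x y = \<pi> y * P y x)"

definition irreducible_kernel :: "('a::finite \<Rightarrow> 'a \<Rightarrow> real) \<Rightarrow> bool" where
  "irreducible_kernel P \<longleftrightarrow> (\<forall>x y. \<exists>n. kpow P n x y > 0)"

definition aperiodic_kernel :: "('a::finite \<Rightarrow> 'a \<Rightarrow> real) \<Rightarrow> bool" where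
  "aperiodic_kernel P \<longleftrightarrow> (\<forall>x. Gcd {n. n > 0 \<and> kpow P n x x > 0} = (1::nat))"

definition ergodic :: "('a::finite \<Rightarrow> 'a \<Rightarrow> real) \<Rightarrow> bool" where
  "ergodic P \<longleftrightarrow> stochastic P \<and> irreducible_kernel P \<and> aperiodic_kernel P"

definition orbit_kernel ::
  "('g, 'c) monoid_scheme \<Rightarrow> ('g \<Rightarrow> 'a::finite \<Rightarrow> 'a) \<Rightarrow> ('a \<Rightarrow> 'a \<Rightarrow> real) \<Rightarrow> ('a \<Rightarrow> 'a \<Rightarrow> real)" where
  "orbit_kernel G \<phi> acc = (\<lambda>x y.
     let off = (\<lambda>z. if z \<in> orbit G \<phi> x \<and> z \<noteq> x
                     then acc x z / (real (card (orbit G \<phi> x)) - 1) else 0)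
     in if y = x then 1 - (\<Sum>z\<in>UNIV - {x}. off z) else off y)"

definition MH_orbit_kernel where
  "MH_orbit_kernel G \<phi> \<pi> = orbit_kernel G \<phi> (\<lambda>x y. min 1 (\<pi> y / \<pi> x))"

definition Barker_orbit_kernel where
  "Barker_orbit_kernel G \<phi> \<pi> = orbit_kernel G \<phi> (\<lambda>x y. \<pi> y / (\<pi> x + \<pi> y))"

end

theory Submission
  imports Defs
begin

lemma ip_pos:
  assumes "\<forall>x. \<pi> x > (0::real)" and "g \<noteq> (\<lambda>_. 0)"
  shows "ip \<pi> g g > 0"
proof -
  obtain a where a: "g a \<noteq> 0" using assms(2) by auto
  have "ip \<pi> g g = (\<Sum>x\<in>UNIV. g x * g x * \<pi> x)" by (simp add: ip_def)
  also have "\<dots> > 0"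
  proof (rule sum_pos2[of UNIV a])
    have "g a * g a > 0" by (metis a not_real_square_gt_zero)
    thus "0 < g a * g a * \<pi> a" using assms(1) by (simp add: mult_pos_pos)
    show "\<And>i. i \<in> UNIV \<Longrightarrow> 0 \<le> g i * g i * \<pi> i" using assms(1)
      by (metis less_eq_real_def mult_nonneg_nonneg zero_le_square)
  qed auto
  finally show ?thesis .
qed

lemma kapply_kmult: "kapply (kmult K L) f = kapply K (kapply L f)"
proof (rule ext)
  fix x
  have "kapply (kmult K L) f x = (\<Sum>y\<in>UNIV. \<Sum>z\<in>UNIV. K x z * L z y * f y)"
    unfolding kapply_def kmult_def by (simp add: sum_distrib_right)
  also have "\<dots> = (\<Sum>z\<in>UNIV. \<Sum>y\<in>UNIV. K x z * L z y * f y)" by (rule sum.swap)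
  also have "\<dots> = kapply K (kapply L f) x"
    unfolding kapply_def by (simp add: sum_distrib_left mult.assoc)
  finally show "kapply (kmult K L) f x = kapply K (kapply L f) x" .
qed

lemma ip_self_adj:
  assumes "reversible \<pi> K"
  shows "ip \<pi> f (kapply K g) = ip \<pi> (kapply K f) g"
proof -
  have r: "\<And>x y. \<pi> x * K x y = \<pi> y * K y x" using assms by (simp add: reversible_def)
  have "ip \<pi> f (kapply K g) = (\<Sum>x\<in>UNIV. \<Sum>y\<in>UNIV. f x * g y * (\<pi> x * K x y))"
    unfolding ip_def kapply_def
    by (auto simp: sum_distrib_left sum_distrib_right mult_ac intro!: sum.cong)
  also have "\<dots> = (\<Sum>x\<in>UNIV. \<Sum>y\<in>UNIV. f x * g y * (\<pi> y * K y x))"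
    using r by simp
  also have "\<dots> = (\<Sum>y\<in>UNIV. \<Sum>x\<in>UNIV. f x * g y * (\<pi> y * K y x))"
    by (rule sum.swap)
  also have "\<dots> = ip \<pi> (kapply K f) g"
    unfolding ip_def kapply_def
    by (auto simp: sum_distrib_left sum_distrib_right mult_ac intro!: sum.cong)
  finally show ?thesis .
qed

lemma stat:
  assumes "stochastic K" "reversible \<pi> K"
  shows "(\<Sum>x\<in>UNIV. K x y * \<pi> x) = \<pi> y"
proof -
  have "(\<Sum>x\<in>UNIV. K x y * \<pi> x) = (\<Sum>x\<in>UNIV. \<pi> y * K y x)"
    using assms(2) by (auto simp: reversible_def mult.commute intro!: sum.cong)
  also have "\<dots> = \<pi> y" using assms(1) by (simp add: stochastic_def flip: sum_distrib_left)
  finally show ?thesis .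
qed

lemma l2_0_pres:
  assumes "stochastic K" "reversible \<pi> K" "f \<in> l2_0 \<pi>"
  shows "kapply K f \<in> l2_0 \<pi>"
proof -
  have "(\<Sum>x\<in>UNIV. kapply K f x * \<pi> x) = (\<Sum>x\<in>UNIV. \<Sum>y\<in>UNIV. f y * (K x y * \<pi> x))"
    unfolding kapply_def by (auto simp: sum_distrib_right sum_distrib_left mult_ac intro!: sum.cong)
  also have "\<dots> = (\<Sum>y\<in>UNIV. f y * (\<Sum>x\<in>UNIV. K x y * \<pi> x))"
    by (subst sum.swap) (simp add: sum_distrib_left)
  also have "\<dots> = (\<Sum>y\<in>UNIV. f y * \<pi> y)" using stat[OF assms(1,2)] by simp
  also have "\<dots> = 0" using assms(3) by (simp add: l2_0_def)
  finally show ?thesis by (simp add: l2_0_def)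
qed

lemma jensen:
  fixes a :: "'a::finite \<Rightarrow> real"
  assumes "\<forall>y. a y \<ge> 0" "(\<Sum>y\<in>UNIV. a y) = 1"
  shows "(\<Sum>y\<in>UNIV. a y * f y)^2 \<le> (\<Sum>y\<in>UNIV. a y * (f y)^2)"
proof -
  define m where "m = (\<Sum>y\<in>UNIV. a y * f y)"
  have "0 \<le> (\<Sum>y\<in>UNIV. a y * (f y - m)^2)"
    using assms(1) by (intro sum_nonneg) simp
  also have "\<dots> = (\<Sum>y\<in>UNIV. a y * (f y)^2) - 2 * m * (\<Sum>y\<in>UNIV. a y * f y) + m^2 * (\<Sum>y\<in>UNIV. a y)"
    by (simp add: power2_diff algebra_simps sum.distrib sum_subtractf sum_distrib_left sum_distrib_right)
  moreover have "(\<Sum>y\<in>UNIV. a y * m^2) = m^2"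
    using assms(2) by (simp add: sum_distrib_right[symmetric])
  ultimately show ?thesis using assms(2) by (simp add: m_def power2_eq_square)
qed

lemma contraction:
  assumes "stochastic K" "reversible \<pi> K" "\<forall>x. \<pi> x > 0"
  shows "ip \<pi> (kapply K f) (kapply K f) \<le> ip \<pi> f f"
proof -
  have "ip \<pi> (kapply K f) (kapply K f) = (\<Sum>x\<in>UNIV. \<pi> x * (\<Sum>y\<in>UNIV. K x y * f y)^2)"
    unfolding ip_def kapply_def by (simp add: power2_eq_square mult_ac)
  also have "\<dots> \<le> (\<Sum>x\<in>UNIV. \<pi> x * (\<Sum>y\<in>UNIV. K x y * (f y)^2))"
    using assms by (intro sum_mono mult_left_mono jensen) (auto simp: stochastic_def less_imp_le)
  also have "\<dots> = (\<Sum>x\<in>UNIV. \<Sum>y\<in>UNIV. (f y)^2 * (K x y * \<pi> x))"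
    by (simp add: sum_distrib_left mult_ac)
  also have "\<dots> = (\<Sum>y\<in>UNIV. \<Sum>x\<in>UNIV. (f y)^2 * (K x y * \<pi> x))"
    by (rule sum.swap)
  also have "\<dots> = (\<Sum>y\<in>UNIV. (f y)^2 * (\<Sum>x\<in>UNIV. K x y * \<pi> x))"
    by (simp add: sum_distrib_left)
  also have "\<dots> = ip \<pi> f f" using stat[OF assms(1,2)] by (simp add: ip_def power2_eq_square)
  finally show ?thesis .
qed

lemma ip_abs_le:
  assumes "\<forall>x. \<pi> x > 0"
  shows "\<bar>ip \<pi> f g\<bar> \<le> (ip \<pi> f f + ip \<pi> g g) / 2"
proof -
  have "\<bar>ip \<pi> f g\<bar> \<le> (\<Sum>x\<in>UNIV. \<bar>f x * g x * \<pi> x\<bar>)" unfolding ip_def by (rule sum_abs)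
  also have "\<dots> \<le> (\<Sum>x\<in>UNIV. (f x * f x * \<pi> x + g x * g x * \<pi> x) / 2)"
  proof (rule sum_mono)
    fix x
    have p: "\<pi> x > 0" using assms by simp
    have "\<bar>f x * g x\<bar> \<le> (f x * f x + g x * g x) / 2"
      using sum_squares_bound[of "\<bar>f x\<bar>" "\<bar>g x\<bar>"]
      by (simp add: abs_mult power2_eq_square)
    hence "\<bar>f x * g x\<bar> * \<pi> x \<le> (f x * f x + g x * g x) / 2 * \<pi> x"
      using p by (intro mult_right_mono) auto
    thus "\<bar>f x * g x * \<pi> x\<bar> \<le> (f x * f x * \<pi> x + g x * g x * \<pi> x) / 2"
      using p by (simp add: abs_mult algebra_simps)
  qed
  also have "\<dots> = (ip \<pi> f f + ip \<pi> g g) / 2"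
    unfolding ip_def by (simp add: sum.distrib sum_divide_distrib[symmetric])
  finally show ?thesis .
qed

lemma ip_K_le:
  assumes "stochastic K" "reversible \<pi> K" "\<forall>x. \<pi> x > 0"
  shows "\<bar>ip \<pi> f (kapply K f)\<bar> \<le> ip \<pi> f f"
  using ip_abs_le[OF assms(3), of f "kapply K f"] contraction[OF assms, of f] by simp

lemma main_abstract:
  assumes pos: "\<forall>x. \<pi> x > 0"
    and K: "stochastic K" "reversible \<pi> K"
    and P: "stochastic P" "reversible \<pi> P"
  shows "rho \<pi> (kmult (kmult K P) K) \<le> rho \<pi> P"
proof (cases "\<exists>f. f \<in> l2_0 \<pi> \<and> f \<noteq> (\<lambda>_. 0)")
  case False
  hence e: "{\<bar>ip \<pi> f (kapply (kmult (kmult K P) K) f)\<bar> / ip \<pi> f f | f. f \<in> l2_0 \<pi> \<and> f \<noteq> (\<lambda>_. 0)} = {}"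
    "{\<bar>ip \<pi> f (kapply P f)\<bar> / ip \<pi> f f | f. f \<in> l2_0 \<pi> \<and> f \<noteq> (\<lambda>_. 0)} = {}"
    by auto
  show ?thesis unfolding rho_def e by simp
next
  case True
  let ?SP = "{\<bar>ip \<pi> f (kapply P f)\<bar> / ip \<pi> f f | f. f \<in> l2_0 \<pi> \<and> f \<noteq> (\<lambda>_. 0)}"
  have bdd: "bdd_above ?SP"
  proof (rule bdd_aboveI[of _ 1])
    fix v assume "v \<in> ?SP"
    then obtain f where f: "f \<noteq> (\<lambda>_. 0)" and v: "v = \<bar>ip \<pi> f (kapply P f)\<bar> / ip \<pi> f f" by auto
    have "ip \<pi> f f > 0" using ip_pos[OF pos f] .
    thus "v \<le> 1" using ip_K_le[OF P pos, of f] v by simp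
  qed
  have upper: "\<bar>ip \<pi> f (kapply P f)\<bar> / ip \<pi> f f \<le> rho \<pi> P" if "f \<in> l2_0 \<pi>" "f \<noteq> (\<lambda>_. 0)" for f
    unfolding rho_def using that by (intro cSup_upper[OF _ bdd]) auto
  have nonneg: "0 \<le> rho \<pi> P"
  proof -
    obtain f where f: "f \<in> l2_0 \<pi>" "f \<noteq> (\<lambda>_. 0)" using True by auto
    have "0 \<le> \<bar>ip \<pi> f (kapply P f)\<bar> / ip \<pi> f f" using ip_pos[OF pos f(2)] by simp
    thus ?thesis using upper[OF f] by linarith
  qed
  show ?thesis unfolding rho_def[of \<pi> "kmult (kmult K P) K"]
  proof (rule cSup_least)
    show "{\<bar>ip \<pi> f (kapply (kmult (kmult K P) K) f)\<bar> / ip \<pi> f f | f. f \<in> l2_0 \<pi> \<and> f \<noteq> (\<lambda>_. 0)} \<noteq> {}"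
      using True by auto
  next
    fix v assume "v \<in> {\<bar>ip \<pi> f (kapply (kmult (kmult K P) K) f)\<bar> / ip \<pi> f f | f. f \<in> l2_0 \<pi> \<and> f \<noteq> (\<lambda>_. 0)}"
    then obtain f where f: "f \<in> l2_0 \<pi>" "f \<noteq> (\<lambda>_. 0)"
      and v: "v = \<bar>ip \<pi> f (kapply (kmult (kmult K P) K) f)\<bar> / ip \<pi> f f" by auto
    define g where "g = kapply K f"
    have ff: "ip \<pi> f f > 0" using ip_pos[OF pos f(2)] .
    have eq: "ip \<pi> f (kapply (kmult (kmult K P) K) f) = ip \<pi> g (kapply P g)"
      unfolding g_def kapply_kmult using ip_self_adj[OF K(2)] by simp
    have gl: "g \<in> l2_0 \<pi>" unfolding g_def using l2_0_pres[OF K f(1)] .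
    have gg: "ip \<pi> g g \<le> ip \<pi> f f" unfolding g_def using contraction[OF K pos] .
    have num: "\<bar>ip \<pi> g (kapply P g)\<bar> \<le> rho \<pi> P * ip \<pi> f f"
    proof (cases "g = (\<lambda>_. 0)")
      case True
      thus ?thesis using nonneg ff by (simp add: ip_def)
    next
      case False
      have gp: "ip \<pi> g g > 0" using ip_pos[OF pos False] .
      have "\<bar>ip \<pi> g (kapply P g)\<bar> / ip \<pi> g g \<le> rho \<pi> P" using upper[OF gl False] .
      hence "\<bar>ip \<pi> g (kapply P g)\<bar> \<le> rho \<pi> P * ip \<pi> g g" using gp by (simp add: divide_le_eq)
      also have "\<dots> \<le> rho \<pi> P * ip \<pi> f f" using gg nonneg by (intro mult_left_mono)
      finally show ?thesis .
    qed
    show "v \<le> rho \<pi> P" using num ff v eq by (simp add: divide_le_eq)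
  qed
qed

lemma orbit_facts:
  assumes ga: "group_action G (UNIV :: 'a set) \<phi>"
  shows "x \<in> orbit G \<phi> x" and "y \<in> orbit G \<phi> x \<Longrightarrow> orbit G \<phi> y = orbit G \<phi> x"
proof -
  interpret group_action G "UNIV :: 'a set" \<phi> by (rule ga)
  show "x \<in> orbit G \<phi> x" by (rule orbit_refl) simp
  assume y: "y \<in> orbit G \<phi> x"
  have yx: "x \<in> orbit G \<phi> y" using orbit_sym[of x y] y by simp
  show "orbit G \<phi> y = orbit G \<phi> x"
  proof
    show "orbit G \<phi> y \<subseteq> orbit G \<phi> x" using orbit_trans[of x y] y by auto
    show "orbit G \<phi> x \<subseteq> orbit G \<phi> y" using orbit_trans[of y x] yx by auto
  qed
qed

lemma orbit_kernel_props:
  fixes \<pi> :: "'a::finite \<Rightarrow> real"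
  assumes ga: "group_action G (UNIV :: 'a set) \<phi>" and pos: "\<forall>x. \<pi> x > 0"
    and a0: "\<And>x y. 0 \<le> acc x y" and a1: "\<And>x y. acc x y \<le> 1"
    and asym: "\<And>x y. \<pi> x * acc x y = \<pi> y * acc y x"
  shows "stochastic (orbit_kernel G \<phi> acc) \<and> reversible \<pi> (orbit_kernel G \<phi> acc)"
proof -
  define Orb where "Orb = orbit G \<phi>"
  have refl: "\<And>x. x \<in> Orb x" unfolding Orb_def using orbit_facts(1)[OF ga] .
  have eqo: "\<And>x y. y \<in> Orb x \<Longrightarrow> Orb y = Orb x" unfolding Orb_def using orbit_facts(2)[OF ga] .
  define off where "off = (\<lambda>x z. if z \<in> Orb x \<and> z \<noteq> x
                     then acc x z / (real (card (Orb x)) - 1) else 0)"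
  have Kdef: "orbit_kernel G \<phi> acc x y = (if y = x then 1 - (\<Sum>z\<in>UNIV - {x}. off x z) else off x y)" for x y
    unfolding orbit_kernel_def off_def Orb_def Let_def by simp
  have cpos: "card (Orb x) \<ge> 1" for x
    using refl[of x] by (metis One_nat_def Suc_leI card_gt_0_iff empty_iff finite)
  have offnn: "off x z \<ge> 0" for x z
    unfolding off_def using cpos[of x] a0 by auto
  have offsum: "(\<Sum>z\<in>UNIV - {x}. off x z) \<le> 1" for x
  proof -
    define c where "c = real (card (Orb x)) - 1"
    have "(\<Sum>z\<in>UNIV - {x}. off x z) \<le> (\<Sum>z\<in>UNIV - {x}. if z \<in> Orb x - {x} then 1 / c else 0)"
      unfolding off_def c_def using cpos[of x] a1
      by (intro sum_mono) (auto intro: divide_right_mono)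
    also have "\<dots> = (\<Sum>z\<in>(UNIV - {x}) \<inter> (Orb x - {x}). 1 / c)"
      by (rule sum.inter_restrict[symmetric]) simp
    also have "(UNIV - {x}) \<inter> (Orb x - {x}) = Orb x - {x}" by auto
    also have "(\<Sum>z\<in>Orb x - {x}. 1 / c) = c * (1 / c)"
      using refl[of x] cpos[of x] by (simp add: c_def card_Diff_singleton of_nat_diff)
    also have "\<dots> \<le> 1" by (cases "c = 0") auto
    finally show ?thesis .
  qed
  have st: "stochastic (orbit_kernel G \<phi> acc)"
    unfolding stochastic_def
  proof (intro conjI allI)
    fix x y show "0 \<le> orbit_kernel G \<phi> acc x y"
      unfolding Kdef using offnn offsum[of x] by auto
  next
    fix x
    have "(\<Sum>y\<in>UNIV. orbit_kernel G \<phi> acc x y)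
        = orbit_kernel G \<phi> acc x x + (\<Sum>y\<in>UNIV - {x}. orbit_kernel G \<phi> acc x y)"
      by (rule sum.remove) auto
    also have "(\<Sum>y\<in>UNIV - {x}. orbit_kernel G \<phi> acc x y) = (\<Sum>y\<in>UNIV - {x}. off x y)"
      by (rule sum.cong) (auto simp: Kdef)
    finally show "(\<Sum>y\<in>UNIV. orbit_kernel G \<phi> acc x y) = 1" by (simp add: Kdef)
  qed
  have rv: "reversible \<pi> (orbit_kernel G \<phi> acc)"
    unfolding reversible_def
  proof (intro allI)
    fix x y
    show "\<pi> x * orbit_kernel G \<phi> acc x y = \<pi> y * orbit_kernel G \<phi> acc y x"
    proof (cases "y = x")
      case True thus ?thesis by simp
    next
      case ne: False
      show ?thesis
      proof (cases "y \<in> Orb x")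
        case True
        hence "x \<in> Orb y" "Orb y = Orb x" using eqo refl by auto
        thus ?thesis using ne True asym[of x y]
          by (simp add: Kdef off_def)
      next
        case False
        hence "x \<notin> Orb y" using eqo refl by metis
        thus ?thesis using ne False by (simp add: Kdef off_def)
      qed
    qed
  qed
  show ?thesis using st rv by simp
qed

theorem proposition3p3:
  fixes \<pi> :: "'a::finite \<Rightarrow> real"
    and P :: "'a \<Rightarrow> 'a \<Rightarrow> real"
    and G :: "('g, 'c) monoid_scheme"
    and \<phi> :: "'g \<Rightarrow> 'a \<Rightarrow> 'a"
  assumes "pmf_full_support \<pi>"
    and "ergodic P"
    and "reversible \<pi> P"
    and "group_action G (UNIV :: 'a set) \<phi>"
  shows "rho \<pi> (kmult (kmult (MH_orbit_kernel G \<phi> \<pi>) P) (MH_orbit_kernel G \<phi> \<pi>)) \<le> rho \<pi> P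
     \<and> rho \<pi> (kmult (kmult (Barker_orbit_kernel G \<phi> \<pi>) P) (Barker_orbit_kernel G \<phi> \<pi>)) \<le> rho \<pi> P"
proof -
  have pos: "\<forall>x. \<pi> x > 0" using assms(1) by (simp add: pmf_full_support_def)
  have Pst: "stochastic P" using assms(2) by (simp add: ergodic_def)
  have MH: "stochastic (MH_orbit_kernel G \<phi> \<pi>) \<and> reversible \<pi> (MH_orbit_kernel G \<phi> \<pi>)"
    unfolding MH_orbit_kernel_def
  proof (rule orbit_kernel_props[OF assms(4) pos])
    fix x y
    show "0 \<le> min 1 (\<pi> y / \<pi> x)" using pos by (simp add: less_imp_le)
    show "min 1 (\<pi> y / \<pi> x) \<le> 1" by simp
    have px: "\<pi> x > 0" "\<pi> y > 0" using pos by auto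
    have "\<pi> x * min 1 (\<pi> y / \<pi> x) = min (\<pi> x) (\<pi> y)"
      using px by (simp add: min_def field_simps)
    moreover have "\<pi> y * min 1 (\<pi> x / \<pi> y) = min (\<pi> y) (\<pi> x)"
      using px by (simp add: min_def field_simps)
    ultimately show "\<pi> x * min 1 (\<pi> y / \<pi> x) = \<pi> y * min 1 (\<pi> x / \<pi> y)"
      by (simp add: min.commute)
  qed
  have BA: "stochastic (Barker_orbit_kernel G \<phi> \<pi>) \<and> reversible \<pi> (Barker_orbit_kernel G \<phi> \<pi>)"
    unfolding Barker_orbit_kernel_def
  proof (rule orbit_kernel_props[OF assms(4) pos])
    fix x y
    have px: "\<pi> x > 0" "\<pi> y > 0" using pos by auto
    show "0 \<le> \<pi> y / (\<pi> x + \<pi> y)" using px by simp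
    show "\<pi> y / (\<pi> x + \<pi> y) \<le> 1" using px by simp
    show "\<pi> x * (\<pi> y / (\<pi> x + \<pi> y)) = \<pi> y * (\<pi> x / (\<pi> y + \<pi> x))"
      by (simp add: add.commute mult.commute)
  qed
  show ?thesis
    using main_abstract[OF pos _ _ Pst assms(3)] MH BA by blast
qed

end
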